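(* Let $n \ge m$ be natural numbers and let $g(x)=a_m x^m + \dots + a_1 x + a_0$ be a polynomial with integer coefficients. Then \[ \sum_{k=0}^{n} g(k)\binom{n}{k}\, d(n-k) = \left(\sum_{i=0}^{m} a_i B_i\right) n!. \]
   Context: For a nonnegative integer $r$, $d(r)$ denotes the number of derangements of $\{1,\dots,r\}$ (permutations with no fixed point), with $d(0)=1$. $B_i$ denotes the $i$-th Bell number, the number of partitions of an $i$-element set into nonempty blocks, with $B_0=1$. *)

theory Defs
  imports "HOL-Combinatorics.Permutations" "HOL-Library.Disjoint_Sets"
begin

definition derangements_count :: "nat \<Rightarrow> nat" where
  "derangements_count r = card {p. p permutes {1..r} \<and> (\<forall>x\<in>{1..r}. p x \<noteq> x)}"

definition Bell :: "nat \<Rightarrow> nat" where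
  "Bell i = card {P. partition_on {1..i} P}"

end

theory Submission
  imports Defs
begin

definition der :: "'a set \<Rightarrow> ('a \<Rightarrow> 'a) set" where
  "der S = {p. p permutes S \<and> (\<forall>x\<in>S. p x \<noteq> x)}"

lemma sum_pow_card:
  assumes "finite A"
  shows "(\<Sum>F\<in>Pow A. f (card F)) = (\<Sum>k\<le>card A. of_nat (card A choose k) * f k)"
proof -
  have "(\<Sum>F\<in>Pow A. f (card F)) = (\<Sum>k\<le>card A. \<Sum>F\<in>{F. F \<in> Pow A \<and> card F = k}. f (card F))"
    by (rule sum.group[symmetric]) (auto simp: assms card_mono)
  also have "\<dots> = (\<Sum>k\<le>card A. \<Sum>F\<in>{F. F \<in> Pow A \<and> card F = k}. f k)"
    by (intro sum.cong refl) auto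
  also have "\<dots> = (\<Sum>k\<le>card A. of_nat (card A choose k) * f k)"
  proof (intro sum.cong refl)
    fix k
    have "{F. F \<in> Pow A \<and> card F = k} = {B. B \<subseteq> A \<and> card B = k}" by auto
    then show "(\<Sum>F\<in>{F. F \<in> Pow A \<and> card F = k}. f k) = of_nat (card A choose k) * f k"
      using n_subsets[OF assms, of k] by simp
  qed
  finally show ?thesis .
qed

lemma der_conj_le:
  assumes "finite T" "bij_betw h S T"
  shows "card (der S) \<le> card (der T)"
proof -
  let ?c = "\<lambda>p. (\<lambda>x. if x \<in> T then h (p (inv_into S h x)) else x)"
  have inj: "inj_on ?c (der S)"
  proof (rule inj_onI)
    fix p q assume p: "p \<in> der S" and q: "q \<in> der S" and e: "?c p = ?c q"
    show "p = q"
    proof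
      fix x show "p x = q x"
      proof (cases "x \<in> S")
        case True
        then have hx: "h x \<in> T" "inv_into S h (h x) = x" using assms(2)
          by (auto simp: bij_betw_def inv_into_f_f)
        have "h (p x) = h (q x)" using fun_cong[OF e, of "h x"] hx by simp
        moreover have "p x \<in> S" "q x \<in> S" using p q True
          by (auto simp: der_def permutes_in_image)
        ultimately show ?thesis using assms(2) by (auto simp: bij_betw_def inj_on_def)
      next
        case False
        then show ?thesis using p q by (auto simp: der_def permutes_def)
      qed
    qed
  qed
  have "?c ` der S \<subseteq> der T"
  proof
    fix r assume "r \<in> ?c ` der S"
    then obtain p where p: "p \<in> der S" and r: "r = ?c p" by auto
    have "r permutes T" unfolding r
      using permutes_bij_inv_into[OF _ assms(2)] p by (auto simp: der_def)
    moreover have "\<forall>x\<in>T. r x \<noteq> x"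
    proof
      fix x assume x: "x \<in> T"
      define y where "y = inv_into S h x"
      have y: "y \<in> S" "h y = x" using x assms(2) unfolding y_def
        by (auto simp: bij_betw_def inv_into_into f_inv_into_f)
      have "p y \<noteq> y" "p y \<in> S" using p y by (auto simp: der_def permutes_in_image)
      then have "h (p y) \<noteq> h y" using y assms(2) by (auto simp: bij_betw_def inj_on_def)
      then show "r x \<noteq> x" using x y r y_def by simp
    qed
    ultimately show "r \<in> der T" by (simp add: der_def)
  qed
  moreover have "finite (der T)" unfolding der_def
    using finite_permutations[OF assms(1)] by simp
  ultimately show ?thesis using card_inj_on_le[OF inj] by blast
qed

lemma card_der:
  assumes "finite S"
  shows "card (der S) = derangements_count (card S)"
proof -
  obtain h where h: "bij_betw h S {1..card S}"
    using finite_same_card_bij[OF assms, of "{1..card S}"] by auto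
  have "card (der S) \<le> card (der {1..card S})" by (rule der_conj_le[OF _ h]) simp
  moreover have "card (der {1..card S}) \<le> card (der S)"
    by (rule der_conj_le[OF assms bij_betw_inv_into[OF h]])
  ultimately show ?thesis by (simp add: derangements_count_def der_def)
qed

lemma fixset_der:
  assumes "F \<subseteq> A"
  shows "{p. p permutes A \<and> {x\<in>A. p x = x} = F} = der (A - F)"
proof safe
  fix p assume p: "p permutes A" and F: "F = {x\<in>A. p x = x}"
  have "p permutes (A - {x\<in>A. p x = x})"
    using p unfolding permutes_def by auto
  then show "p \<in> der (A - {x \<in> A. p x = x})" by (auto simp: der_def)
next
  fix p assume "p \<in> der (A - F)"
  then have p: "p permutes (A - F)" "\<forall>x\<in>A-F. p x \<noteq> x" by (auto simp: der_def)
  show "p permutes A" using p(1) by (rule permutes_subset) auto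
  show "\<And>x. x \<in> A \<Longrightarrow> p x = x \<Longrightarrow> x \<in> F" using p(2) by auto
  show "\<And>x. x \<in> F \<Longrightarrow> x \<in> A" using assms by auto
  show "\<And>x. x \<in> F \<Longrightarrow> p x = x" using p(1) by (auto simp: permutes_def)
qed

lemma der_sum:
  "(\<Sum>k\<le>N. (N choose k) * derangements_count (N - k)) = fact N"
proof -
  let ?A = "{1..N}"
  have fin: "finite ?A" by simp
  have "fact N = card {p. p permutes ?A}" by (simp add: card_permutations)
  also have "\<dots> = (\<Sum>F\<in>Pow ?A. card {p \<in> {p. p permutes ?A}. {x\<in>?A. p x = x} = F})"
  proof -
    have sub: "(\<lambda>p. {x\<in>?A. p x = x}) ` {p. p permutes ?A} \<subseteq> Pow ?A" by blast
    have fp: "finite {p. p permutes ?A}" by (rule finite_permutations) simp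
    show ?thesis using sum.group[OF fp _ sub, of "\<lambda>_. 1::nat"] by simp
  qed
  also have "\<dots> = (\<Sum>F\<in>Pow ?A. card (der (?A - F)))"
    by (intro sum.cong refl) (simp add: fixset_der[symmetric])
  also have "\<dots> = (\<Sum>F\<in>Pow ?A. derangements_count (N - card F))"
    by (intro sum.cong refl) (auto simp: card_der card_Diff_subset finite_subset)
  also have "\<dots> = (\<Sum>k\<le>N. (N choose k) * derangements_count (N - k))"
    using sum_pow_card[OF fin, of "\<lambda>k. derangements_count (N - k)"] by simp
  finally show ?thesis by simp
qed


definition pc :: "'a set \<Rightarrow> nat" where "pc S = card {P. partition_on S P}"

lemma pc_le:
  assumes "finite T" "bij_betw h S T"
  shows "pc S \<le> pc T"
proof -
  have ih: "inj_on h S" and im: "h ` S = T" using assms(2) by (auto simp: bij_betw_def)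
  let ?c = "\<lambda>P. (`) h ` P"
  have inj: "inj_on ?c {P. partition_on S P}"
  proof (rule inj_onI)
    fix P Q assume P: "P \<in> {P. partition_on S P}" and Q: "Q \<in> {P. partition_on S P}"
      and e: "?c P = ?c Q"
    have sP: "\<And>p. p \<in> P \<Longrightarrow> p \<subseteq> S" and sQ: "\<And>p. p \<in> Q \<Longrightarrow> p \<subseteq> S"
      using P Q by (auto simp: partition_on_def)
    have key: "p \<in> Q" if "p \<in> P" "?c P = ?c Q" "\<And>p. p \<in> P \<Longrightarrow> p \<subseteq> S" "\<And>p. p \<in> Q \<Longrightarrow> p \<subseteq> S"
      for p P Q
    proof -
      have "h ` p \<in> ?c Q" using that by auto
      then obtain q where q: "q \<in> Q" "h ` p = h ` q" by auto
      then have "p = q" using inj_on_image_eq_iff[OF ih] that q by auto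
      then show ?thesis using q by simp
    qed
    show "P = Q" using key[OF _ e sP sQ] key[OF _ e[symmetric] sQ sP] by blast
  qed
  have "?c ` {P. partition_on S P} \<subseteq> {P. partition_on T P}"
  proof safe
    fix P assume P: "partition_on S P"
    have "partition_on (h ` S) (?c P - {{}})" by (rule partition_on_inj_image[OF P ih])
    moreover have "{} \<notin> ?c P" using P by (auto simp: partition_on_def)
    ultimately show "partition_on T (?c P)" using im by simp
  qed
  moreover have "finite {P. partition_on T P}" by (rule finitely_many_partition_on[OF assms(1)])
  ultimately show ?thesis unfolding pc_def using card_inj_on_le[OF inj] by blast
qed

lemma pc_card:
  assumes "finite S"
  shows "pc S = Bell (card S)"
proof -
  obtain h where h: "bij_betw h S {1..card S}"
    using finite_same_card_bij[OF assms, of "{1..card S}"] by auto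
  have "pc S \<le> pc {1..card S}" by (rule pc_le[OF _ h]) simp
  moreover have "pc {1..card S} \<le> pc S"
    by (rule pc_le[OF assms bij_betw_inv_into[OF h]])
  ultimately show ?thesis by (simp add: Bell_def pc_def)
qed

lemma part_insert_decomp:
  assumes "x \<notin> A"
  shows "{Q. partition_on (insert x A) Q} =
    (\<Union>C\<in>Pow A. insert (insert x C) ` {P. partition_on (A - C) P})"
proof (rule set_eqI, rule iffI)
  fix Q assume "Q \<in> {Q. partition_on (insert x A) Q}"
  then have Q: "partition_on (insert x A) Q" by simp
  have U: "\<Union>Q = insert x A" using partition_onD1[OF Q] by simp
  have "x \<in> \<Union>Q" using U by simp
  then obtain b where b: "b \<in> Q" "x \<in> b" by blast
  define C where "C = b - {x}"
  have bC: "b = insert x C" using b C_def by blast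
  have "b \<subseteq> insert x A" using U b by blast
  then have CA: "C \<subseteq> A" using C_def assms by blast
  have QI: "Q = insert b (Q - {b})" using b by blast
  have dj: "disjnt b (\<Union>(Q - {b}))"
  proof -
    have "\<And>q. q \<in> Q - {b} \<Longrightarrow> disjnt b q"
      using partition_onD2[OF Q] b unfolding disjoint_def pairwise_def by blast
    then show ?thesis unfolding disjnt_def by blast
  qed
  have "partition_on (insert x A) (insert b (Q - {b}))" using Q QI by simp
  then have "partition_on (insert x A - b) (Q - {b})"
    using partition_on_insert[OF dj, of "insert x A"] by simp
  moreover have "insert x A - b = A - C" using bC assms by blast
  ultimately have "Q - {b} \<in> {P. partition_on (A - C) P}" by simp
  then have "Q \<in> insert (insert x C) ` {P. partition_on (A - C) P}"
    using QI bC by (metis image_eqI)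
  then show "Q \<in> (\<Union>C\<in>Pow A. insert (insert x C) ` {P. partition_on (A - C) P})"
    using CA by blast
next
  fix Q assume "Q \<in> (\<Union>C\<in>Pow A. insert (insert x C) ` {P. partition_on (A - C) P})"
  then obtain C P where CA: "C \<subseteq> A" and P: "partition_on (A - C) P"
    and QP: "Q = insert (insert x C) P" by blast
  have dj: "disjnt (insert x C) (\<Union>P)" using partition_onD1[OF P] assms CA
    by (auto simp: disjnt_def)
  have "insert x A - insert x C = A - C" using assms by blast
  then have "partition_on (insert x A) (insert (insert x C) P)"
    using partition_on_insert[OF dj, of "insert x A"] P CA by auto
  then show "Q \<in> {Q. partition_on (insert x A) Q}" using QP by simp
qed

lemma pc_insert:
  assumes "x \<notin> A" "finite A"
  shows "pc (insert x A) = (\<Sum>C\<in>Pow A. pc (A - C))"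
proof -
  have "pc (insert x A) = card (\<Union>C\<in>Pow A. insert (insert x C) ` {P. partition_on (A - C) P})"
    unfolding pc_def part_insert_decomp[OF assms(1)] ..
  also have "\<dots> = (\<Sum>C\<in>Pow A. card (insert (insert x C) ` {P. partition_on (A - C) P}))"
  proof (rule card_UN_disjoint)
    show "finite (Pow A)" using assms by simp
    show "\<forall>C\<in>Pow A. finite (insert (insert x C) ` {P. partition_on (A - C) P})"
      using assms finitely_many_partition_on by blast
    show "\<forall>C1\<in>Pow A. \<forall>C2\<in>Pow A. C1 \<noteq> C2 \<longrightarrow>
      insert (insert x C1) ` {P. partition_on (A - C1) P} \<inter> insert (insert x C2) ` {P. partition_on (A - C2) P} = {}"
    proof (intro ballI impI)
      fix C1 C2 assume C: "C1 \<in> Pow A" "C2 \<in> Pow A" "C1 \<noteq> C2"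
      show "insert (insert x C1) ` {P. partition_on (A - C1) P} \<inter> insert (insert x C2) ` {P. partition_on (A - C2) P} = {}"
      proof (rule ccontr)
        assume "\<not> ?thesis"
        then obtain Q where Q1: "Q \<in> insert (insert x C1) ` {P. partition_on (A - C1) P}"
          and Q2: "Q \<in> insert (insert x C2) ` {P. partition_on (A - C2) P}" by blast
        from Q1 obtain P1 where P1: "Q = insert (insert x C1) P1" by blast
        from Q2 obtain P2 where P2: "partition_on (A - C2) P2" "Q = insert (insert x C2) P2" by blast
        have "insert x C1 \<notin> P2" using partition_onD1[OF P2(1)] assms(1) by blast
        moreover have "insert x C1 \<in> Q" using P1 by simp
        ultimately have e: "insert x C1 = insert x C2" using P2(2) by simp
        have "x \<notin> C1" "x \<notin> C2" using C assms(1) by blast+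
        then have "C1 = C2" using e by (metis Diff_insert_absorb)
        then show False using C by simp
      qed
    qed
  qed
  also have "\<dots> = (\<Sum>C\<in>Pow A. pc (A - C))"
  proof (intro sum.cong refl)
    fix C assume "C \<in> Pow A"
    have "inj_on (insert (insert x C)) {P. partition_on (A - C) P}"
    proof (rule inj_onI)
      fix P1 P2 assume P: "P1 \<in> {P. partition_on (A - C) P}" "P2 \<in> {P. partition_on (A - C) P}"
        and e: "insert (insert x C) P1 = insert (insert x C) P2"
      have "insert x C \<notin> P1" using P(1) partition_onD1[of "A - C" P1] assms(1) by blast
      moreover have "insert x C \<notin> P2" using P(2) partition_onD1[of "A - C" P2] assms(1) by blast
      ultimately show "P1 = P2" using e by (metis insert_ident)
    qed
    then show "card (insert (insert x C) ` {P. partition_on (A - C) P}) = pc (A - C)"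
      by (simp add: card_image pc_def)
  qed
  finally show ?thesis .
qed

lemma Bell_Suc: "Bell (Suc i) = (\<Sum>j\<le>i. (i choose j) * Bell j)"
proof -
  let ?A = "{1..i}"
  have "Bell (Suc i) = pc (insert (Suc i) ?A)"
    using pc_card[of "insert (Suc i) ?A"] by simp
  also have "\<dots> = (\<Sum>C\<in>Pow ?A. pc (?A - C))" by (rule pc_insert) simp_all
  also have "\<dots> = (\<Sum>C\<in>Pow ?A. Bell (i - card C))"
    by (intro sum.cong refl) (auto simp: pc_card card_Diff_subset finite_subset)
  also have "\<dots> = (\<Sum>k\<le>i. (i choose k) * Bell (i - k))"
    using sum_pow_card[of ?A "\<lambda>k. Bell (i - k)"] by simp
  also have "\<dots> = (\<Sum>k\<le>i. (i choose (i - k)) * Bell (i - k))"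
    by (intro sum.cong refl) (metis atMost_iff binomial_symmetric)
  also have "\<dots> = (\<Sum>j\<le>i. (i choose j) * Bell j)"
    by (rule sum.reindex_bij_witness[where i="\<lambda>k. i - k" and j="\<lambda>k. i - k"]) auto
  finally show ?thesis .
qed


definition M :: "nat \<Rightarrow> nat \<Rightarrow> nat" where
  "M i n = (\<Sum>k\<le>n. k ^ i * (n choose k) * derangements_count (n - k))"

lemma M_Suc: "M (Suc i) (Suc n) = Suc n * (\<Sum>j\<le>i. (i choose j) * M j n)"
proof -
  have "M (Suc i) (Suc n) = (\<Sum>k\<le>n. Suc k ^ Suc i * (Suc n choose Suc k) * derangements_count (n - k))"
    unfolding M_def by (subst sum.atMost_Suc_shift) simp
  also have "\<dots> = (\<Sum>k\<le>n. Suc n * (Suc k ^ i * (n choose k) * derangements_count (n - k)))"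
  proof (intro sum.cong refl)
    fix k
    have "Suc k ^ Suc i * (Suc n choose Suc k) = Suc k ^ i * (Suc k * (Suc n choose Suc k))"
      by (simp only: power_Suc mult_ac)
    also have "\<dots> = Suc k ^ i * (Suc n * (n choose k))" by (simp only: Suc_times_binomial)
    finally have e: "Suc k ^ Suc i * (Suc n choose Suc k) = Suc n * (Suc k ^ i * (n choose k))"
      by (simp only: mult_ac)
    show "Suc k ^ Suc i * (Suc n choose Suc k) * derangements_count (n - k) =
      Suc n * (Suc k ^ i * (n choose k) * derangements_count (n - k))"
      by (subst e) (rule mult.assoc)
  qed
  also have "\<dots> = Suc n * (\<Sum>k\<le>n. \<Sum>j\<le>i. (i choose j) * (k ^ j * (n choose k) * derangements_count (n - k)))"
  proof -
    have "\<And>k. Suc k ^ i = (\<Sum>j\<le>i. (i choose j) * k ^ j)"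
    proof -
      fix k
      show "Suc k ^ i = (\<Sum>j\<le>i. (i choose j) * k ^ j)"
        using binomial[of k 1 i] by (simp add: mult_ac)
    qed
    then show ?thesis by (simp add: sum_distrib_left sum_distrib_right mult.assoc)
  qed
  also have "\<dots> = Suc n * (\<Sum>j\<le>i. (i choose j) * M j n)"
    by (subst sum.swap) (simp add: M_def sum_distrib_left)
  finally show ?thesis .
qed

lemma M_Bell: "i \<le> n \<Longrightarrow> M i n = Bell i * fact n"
proof (induction i arbitrary: n rule: less_induct)
  case (less i)
  show ?case
  proof (cases i)
    case 0
    have "Bell 0 = 1" using pc_card[of "{}::nat set"] by (simp add: pc_def partition_on_empty)
    then show ?thesis using der_sum[of n] 0 by (simp add: M_def)
  next
    case (Suc i')
    then obtain n' where n: "n = Suc n'" using less.prems by (cases n) auto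
    have "M i n = Suc n' * (\<Sum>j\<le>i'. (i' choose j) * M j n')" using Suc n M_Suc by simp
    also have "\<dots> = Suc n' * (\<Sum>j\<le>i'. (i' choose j) * (Bell j * fact n'))"
      using less.IH less.prems Suc n by (intro arg_cong[where f="\<lambda>x. Suc n' * x"] sum.cong refl) auto
    also have "\<dots> = Bell i * fact n"
    proof -
      have "Suc n' * (\<Sum>j\<le>i'. (i' choose j) * (Bell j * fact n')) =
        (\<Sum>j\<le>i'. (i' choose j) * Bell j) * (Suc n' * fact n')"
        by (simp only: sum_distrib_left sum_distrib_right mult_ac)
      then show ?thesis using Suc n Bell_Suc[of i'] fact_Suc[of n'] by simp
    qed
    finally show ?thesis .
  qed
qed

theorem theorem2:
  fixes n m :: nat and a :: "nat \<Rightarrow> int" and g :: "int \<Rightarrow> int"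
  assumes "m \<le> n"
    and "\<And>x. g x = (\<Sum>i\<le>m. a i * x ^ i)"
  shows "(\<Sum>k\<le>n. g (int k) * int (n choose k) * int (derangements_count (n - k)))
         = (\<Sum>i\<le>m. a i * int (Bell i)) * int (fact n)"
proof -
  have "(\<Sum>k\<le>n. g (int k) * int (n choose k) * int (derangements_count (n - k)))
      = (\<Sum>k\<le>n. \<Sum>i\<le>m. a i * int (k ^ i * (n choose k) * derangements_count (n - k)))"
    by (intro sum.cong refl) (simp add: assms(2) sum_distrib_right sum_distrib_left mult_ac)
  also have "\<dots> = (\<Sum>i\<le>m. a i * int (M i n))"
    by (subst sum.swap) (simp add: M_def sum_distrib_left of_nat_sum)
  also have "\<dots> = (\<Sum>i\<le>m. a i * int (Bell i) * int (fact n))"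
    using assms(1) by (intro sum.cong refl) (simp add: M_Bell)
  also have "\<dots> = (\<Sum>i\<le>m. a i * int (Bell i)) * int (fact n)"
    by (simp add: sum_distrib_right)
  finally show ?thesis .
qed

end
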